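(* Let $\Gamma\subset\mathbb{R}^2$ be a simple closed curve such that every set of $6$ points of $\Gamma$ is in c.s.c. position. If $\ell$ and $\ell'$ are two distinct parallel supporting lines of $\Gamma$, then $\ell\cap\Gamma$ and $\ell'\cap\Gamma$ are segments (possibly degenerate, i.e. single points, regarded as segments of length zero) of equal length.
   Context: A set of points in $\mathbb{R}^2$ is in c.s.c. position if it is contained in the boundary of a centrally symmetric convex body. Under the hypothesis, $\Gamma$ is the boundary of a convex body. A supporting line of $\Gamma$ is a line meeting $\Gamma$ such that $\Gamma$ lies in one of the closed half-planes it determines. *)

theory Defs
  imports "HOL-Analysis.Analysis"
begin

definition simple_closed_curve :: "(real^2) set \<Rightarrow> bool" where
  "simple_closed_curve \<Gamma> \<longleftrightarrow>
     (\<exists>g. simple_path g \<and> pathfinish g = pathstart g \<and> path_image g = \<Gamma>)"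

definition cs_convex_body :: "(real^2) set \<Rightarrow> bool" where
  "cs_convex_body K \<longleftrightarrow> compact K \<and> convex K \<and> interior K \<noteq> {} \<and>
     (\<exists>c. \<forall>x\<in>K. 2 *\<^sub>R c - x \<in> K)"

definition csc_position :: "(real^2) set \<Rightarrow> bool" where
  "csc_position S \<longleftrightarrow> (\<exists>K. cs_convex_body K \<and> S \<subseteq> frontier K)"

definition is_line :: "(real^2) set \<Rightarrow> bool" where
  "is_line L \<longleftrightarrow> (\<exists>u c. u \<noteq> 0 \<and> L = {x. inner u x = c})"

definition parallel_lines :: "(real^2) set \<Rightarrow> (real^2) set \<Rightarrow> bool" where
  "parallel_lines L L' \<longleftrightarrow>
     (\<exists>u c c'. u \<noteq> 0 \<and> L = {x. inner u x = c} \<and> L' = {x. inner u x = c'})"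

definition supporting_line :: "(real^2) set \<Rightarrow> (real^2) set \<Rightarrow> bool" where
  "supporting_line \<Gamma> L \<longleftrightarrow>
     (\<exists>u c. u \<noteq> 0 \<and> L = {x. inner u x = c} \<and> L \<inter> \<Gamma> \<noteq> {} \<and>
        (\<Gamma> \<subseteq> {x. inner u x \<le> c} \<or> \<Gamma> \<subseteq> {x. inner u x \<ge> c}))"

end

theory Submission
  imports Defs
begin


lemma inner2: "(x::real^2) \<bullet> y = x$1 * y$1 + x$2 * y$2"
  by (simp add: inner_vec_def sum_2)

lemma par2d:
  fixes u w d :: "real^2"
  assumes "u \<noteq> 0" "u \<bullet> d = 0" "w \<bullet> d = 0" "d \<noteq> 0"
  shows "w = ((w \<bullet> u) / (u \<bullet> u)) *\<^sub>R u"
proof -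
  have e1: "u$1*d$1 + u$2*d$2 = 0" and e2: "w$1*d$1 + w$2*d$2 = 0" using assms by (simp_all add: inner2)
  have "d$1 * (u$1*w$2 - u$2*w$1) = w$2*(u$1*d$1) - u$2*(w$1*d$1)" by (simp add: algebra_simps)
  also have "\<dots> = 0" using e1 e2 by (simp add: eq_neg_iff_add_eq_0[symmetric] algebra_simps)
  finally have c1: "d$1 * (u$1*w$2 - u$2*w$1) = 0" .
  have "d$2 * (u$1*w$2 - u$2*w$1) = u$1*(w$2*d$2) - w$1*(u$2*d$2)" by (simp add: algebra_simps)
  also have "\<dots> = 0" using e1 e2
    by (metis add.commute add_diff_cancel_left' mult.left_commute mult_minus_right diff_minus_eq_add eq_neg_iff_add_eq_0)
  finally have c2: "d$2 * (u$1*w$2 - u$2*w$1) = 0" .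
  have dnz: "d$1 \<noteq> 0 \<or> d$2 \<noteq> 0" using assms(4) by (metis exhaust_2 vec_eq_iff zero_index)
  have det: "u$1*w$2 = u$2*w$1" using c1 c2 dnz by auto
  have uu: "u \<bullet> u \<noteq> 0" using assms(1) by simp
  have uu2: "u \<bullet> u = u$1*u$1 + u$2*u$2" by (simp add: inner2)
  show ?thesis
  proof (subst vec_eq_iff, intro allI)
    fix i :: 2
    have "w$1 * (u \<bullet> u) = (w \<bullet> u) * u$1" using det by (simp add: uu2 inner2 algebra_simps)
    moreover have "w$2 * (u \<bullet> u) = (w \<bullet> u) * u$2" using det by (simp add: uu2 inner2 algebra_simps)
    ultimately show "w$i = (((w \<bullet> u) / (u \<bullet> u)) *\<^sub>R u)$i" using uu
      using exhaust_2[of i] by (auto simp: field_simps)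
  qed
qed

lemma eq2d:
  fixes u v x y :: "real^2"
  assumes "u \<noteq> 0" "v \<noteq> 0" "u \<bullet> v = 0" "u \<bullet> x = u \<bullet> y" "v \<bullet> x = v \<bullet> y"
  shows "x = y"
proof (rule ccontr)
  assume "x \<noteq> y"
  then have d: "x - y \<noteq> 0" by simp
  have "v = ((v \<bullet> u) / (u \<bullet> u)) *\<^sub>R u"
    by (rule par2d[OF assms(1) _ _ d]) (use assms in \<open>auto simp: inner_diff_right\<close>)
  then have "v \<bullet> u = ((v \<bullet> u) / (u \<bullet> u)) * (u \<bullet> u)" by (metis inner_scaleR_left)
  then have "v = 0 *\<^sub>R u" using assms(3) \<open>v = _\<close> by (simp add: inner_commute)
  then show False using assms(2) by simp
qed

lemma support:
  assumes "cs_convex_body K" "p \<in> frontier K"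
  shows "\<exists>w. w \<noteq> 0 \<and> (\<forall>y\<in>K. w \<bullet> y \<le> w \<bullet> p)"
proof -
  have K: "compact K" "convex K" "interior K \<noteq> {}" using assms(1) unfolding cs_convex_body_def by auto
  have cl: "closure K = K" using K compact_imp_closed closure_closed by blast
  have ri: "rel_interior K = interior K" using K rel_interior_nonempty_interior by blast
  have "p \<in> closure K" "p \<notin> rel_interior K" using assms(2) ri unfolding frontier_def by auto
  then obtain a where "a \<noteq> 0" "\<And>y. y \<in> closure K \<Longrightarrow> a \<bullet> p \<le> a \<bullet> y"
    using supporting_hyperplane_relative_frontier[OF K(2)] by metis
  then show ?thesis by (intro exI[of _ "-a"]) (auto simp: cl)
qed

lemma curve_infinite:
  assumes "simple_closed_curve \<Gamma>"
  shows "infinite \<Gamma>"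
proof -
  obtain g where g: "simple_path g" "path_image g = \<Gamma>" using assms unfolding simple_closed_curve_def by blast
  have "inj_on g {0<..<(1::real)}" using g(1) unfolding simple_path_def loop_free_def inj_on_def by fastforce
  moreover have "g ` {0<..<1} \<subseteq> \<Gamma>" using g(2) unfolding path_image_def by auto
  ultimately show ?thesis using finite_imageD infinite_Ioo finite_subset
    by (metis zero_less_one)
qed

lemma get_K:
  assumes "simple_closed_curve \<Gamma>"
    and hyp: "\<And>S. S \<subseteq> \<Gamma> \<Longrightarrow> finite S \<Longrightarrow> card S = 6 \<Longrightarrow> csc_position S"
    and "set xs \<subseteq> \<Gamma>" "length xs \<le> 6"
  shows "\<exists>K. cs_convex_body K \<and> set xs \<subseteq> frontier K"
proof -
  have "infinite (\<Gamma> - set xs)" using curve_infinite[OF assms(1)] by auto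
  then obtain T where T: "finite T" "card T = 6 - card (set xs)" "T \<subseteq> \<Gamma> - set xs"
    using infinite_arbitrarily_large by blast
  have c: "card (set xs) \<le> 6" using card_length assms(4) le_trans by blast
  have "card (set xs \<union> T) = 6" using T c by (subst card_Un_disjoint) auto
  then have "csc_position (set xs \<union> T)" using T assms(3) by (intro hyp) auto
  then show ?thesis unfolding csc_position_def by blast
qed

lemma conv_eq3:
  fixes A B C P :: real
  assumes "\<alpha> > 0" "\<beta> > 0" "\<gamma> \<ge> 0" "\<alpha> + \<beta> + \<gamma> = 1"
    "P = \<alpha> * A + \<beta> * B + \<gamma> * C" "A \<le> P" "B \<le> P" "C \<le> P"
  shows "A = P \<and> B = P"
proof -
  have "\<alpha> * (P - A) + \<beta> * (P - B) + \<gamma> * (P - C) = (\<alpha> + \<beta> + \<gamma>) * P - (\<alpha> * A + \<beta> * B + \<gamma> * C)"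
    by (simp add: algebra_simps)
  also have "\<dots> = 0" using assms(4,5) by simp
  finally have "\<alpha> * (P - A) + \<beta> * (P - B) + \<gamma> * (P - C) = 0" .
  moreover have "\<alpha> * (P - A) \<ge> 0" "\<beta> * (P - B) \<ge> 0" "\<gamma> * (P - C) \<ge> 0"
    using assms by auto
  ultimately have "\<alpha> * (P - A) = 0" "\<beta> * (P - B) = 0" by linarith+
  then show ?thesis using assms(1,2) by auto
qed

lemma interior_contra:
  fixes u a b p1 p2 :: "real^2"
  assumes "cs_convex_body K" "p1 \<in> frontier K" "a \<in> K" "b \<in> K" "p2 \<in> K"
    "\<alpha> > 0" "\<beta> > 0" "\<gamma> > 0" "\<alpha> + \<beta> + \<gamma> = 1"
    "p1 = \<alpha> *\<^sub>R a + \<beta> *\<^sub>R b + \<gamma> *\<^sub>R p2"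
    "u \<noteq> 0" "u \<bullet> a = M" "u \<bullet> b = M" "a \<noteq> b" "u \<bullet> p2 < M"
  shows False
proof -
  obtain w where w: "w \<noteq> 0" "\<forall>y\<in>K. w \<bullet> y \<le> w \<bullet> p1" using support assms(1,2) by blast
  have e: "w \<bullet> p1 = \<alpha> * (w \<bullet> a) + \<beta> * (w \<bullet> b) + \<gamma> * (w \<bullet> p2)"
    using assms(10) by (simp add: inner_add_right)
  have fa: "w \<bullet> a \<le> w \<bullet> p1" "w \<bullet> b \<le> w \<bullet> p1" "w \<bullet> p2 \<le> w \<bullet> p1" using w(2) assms(3,4,5) by auto
  have "w \<bullet> a = w \<bullet> p1 \<and> w \<bullet> b = w \<bullet> p1"
    using conv_eq3[where \<alpha>=\<alpha> and \<beta>=\<beta> and \<gamma>=\<gamma> and A="w \<bullet> a" and B="w \<bullet> b" and C="w \<bullet> p2" and P="w \<bullet> p1"]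
      assms(6-9) e fa by linarith
  moreover have "w \<bullet> p2 = w \<bullet> p1 \<and> w \<bullet> a = w \<bullet> p1"
    using conv_eq3[where \<alpha>=\<gamma> and \<beta>=\<alpha> and \<gamma>=\<beta> and A="w \<bullet> p2" and B="w \<bullet> a" and C="w \<bullet> b" and P="w \<bullet> p1"]
      assms(6-9) e fa by linarith
  ultimately have h: "w \<bullet> (b - a) = 0" "w \<bullet> (p2 - a) = 0" by (auto simp: inner_diff_right)
  have "w = ((w \<bullet> u) / (u \<bullet> u)) *\<^sub>R u"
    by (rule par2d[OF assms(11) _ h(1)]) (use assms in \<open>auto simp: inner_diff_right\<close>)
  then have "((w \<bullet> u) / (u \<bullet> u)) * (u \<bullet> p2 - M) = 0" using h(2) assms(12)
    by (metis inner_diff_right inner_scaleR_left)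
  then have z: "((w \<bullet> u) / (u \<bullet> u)) = 0" using assms(15) by simp
  have "w = 0" using \<open>w = _\<close> z by (metis scale_zero_left)
  then show False using w by simp
qed

lemma flat:
  fixes u q1 q2 p :: "real^2"
  assumes "cs_convex_body K" "p \<in> frontier K" "q1 \<in> K" "q2 \<in> K"
    "p = (1 - \<mu>) *\<^sub>R q1 + \<mu> *\<^sub>R q2" "0 < \<mu>" "\<mu> < 1"
    "u \<noteq> 0" "u \<bullet> q1 = u \<bullet> q2" "q1 \<noteq> q2"
  shows "(\<forall>y\<in>K. u \<bullet> y \<le> u \<bullet> p) \<or> (\<forall>y\<in>K. u \<bullet> y \<ge> u \<bullet> p)"
proof -
  obtain w where w: "w \<noteq> 0" "\<forall>y\<in>K. w \<bullet> y \<le> w \<bullet> p" using support assms(1,2) by blast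
  have e: "w \<bullet> p = (1 - \<mu>) * (w \<bullet> q1) + \<mu> * (w \<bullet> q2) + 0 * (w \<bullet> q1)"
    using assms(5) by (simp add: inner_add_right)
  have "w \<bullet> q1 = w \<bullet> p \<and> w \<bullet> q2 = w \<bullet> p"
    by (rule conv_eq3[OF _ _ _ _ e]) (use w(2) assms(3,4,6,7) in \<open>simp_all\<close>)
  then have h: "w \<bullet> (q2 - q1) = 0" by (auto simp: inner_diff_right)
  define k where "k = (w \<bullet> u) / (u \<bullet> u)"
  have wk: "w = k *\<^sub>R u" unfolding k_def
    by (rule par2d[OF assms(8) _ h]) (use assms in \<open>auto simp: inner_diff_right\<close>)
  then have "k \<noteq> 0" using w by auto
  have kk: "\<forall>y\<in>K. k * (u \<bullet> y) \<le> k * (u \<bullet> p)" using w wk by auto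
  then show ?thesis
  proof (cases "k > 0")
    case True
    then show ?thesis using kk by (auto simp: mult_le_cancel_left)
  next
    case False
    then have "k < 0" using \<open>k \<noteq> 0\<close> by simp
    then show ?thesis using kk by (auto simp: mult_le_cancel_left)
  qed
qed



lemma reparam:
  assumes "simple_closed_curve \<Gamma>" "p \<in> \<Gamma>"
  shows "\<exists>g. simple_path g \<and> pathfinish g = pathstart g \<and> path_image g = \<Gamma> \<and> g 0 = p"
proof -
  obtain g where g: "simple_path g" "pathfinish g = pathstart g" "path_image g = \<Gamma>"
    using assms(1) unfolding simple_closed_curve_def by blast
  obtain s where s: "s \<in> {0..1}" "g s = p" using assms(2) g(3) unfolding path_image_def by auto
  have "simple_path (shiftpath s g)" using simple_path_shiftpath g s by auto
  moreover have "pathfinish (shiftpath s g) = pathstart (shiftpath s g)" using closed_shiftpath g s by auto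
  moreover have "path_image (shiftpath s g) = \<Gamma>" using path_image_shiftpath g s by auto
  moreover have "shiftpath s g 0 = p" using s unfolding shiftpath_def by auto
  ultimately show ?thesis by blast
qed

lemma lf:
  assumes "simple_path g" "x \<in> {0<..<1}" "y \<in> {0..1}" "x \<noteq> y"
  shows "g x \<noteq> g y"
proof
  assume "g x = g y"
  moreover have "x \<in> {0..1}" using assms(2) by auto
  ultimately have "x = y \<or> x = 0 \<and> y = 1 \<or> x = 1 \<and> y = 0"
    using assms(1,3) unfolding simple_path_def loop_free_def by blast
  then show False using assms(2,4) by auto
qed

lemma perp_exists:
  fixes u :: "real^2"
  assumes "u \<noteq> 0"
  shows "\<exists>v. v \<noteq> 0 \<and> u \<bullet> v = 0"
proof -
  define v :: "real^2" where "v = vector [- u$2, u$1]"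
  have "u \<bullet> v = 0" by (simp add: inner2 v_def)
  moreover have "v \<noteq> 0"
  proof
    assume "v = 0"
    then have "v$1 = 0" "v$2 = 0" by simp_all
    then have "u$1 = 0" "u$2 = 0" unfolding v_def by simp_all
    then have "u = 0" by (metis exhaust_2 vec_eq_iff zero_index)
    then show False using assms by simp
  qed
  ultimately show ?thesis by blast
qed

lemma gap_inner:
  fixes u a b p q r :: "real^2"
  assumes sc: "simple_closed_curve \<Gamma>"
    and hyp: "\<And>S. S \<subseteq> \<Gamma> \<Longrightarrow> finite S \<Longrightarrow> card S = 6 \<Longrightarrow> csc_position S"
    and u: "u \<noteq> 0" and ab: "a \<in> \<Gamma>" "b \<in> \<Gamma>" "u \<bullet> a = M" "u \<bullet> b = M" "a \<noteq> b"
    and mu: "0 < \<mu>" "\<mu> < 1" "r = (1 - \<mu>) *\<^sub>R a + \<mu> *\<^sub>R b"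
    and pq: "p \<in> \<Gamma>" "q \<in> \<Gamma>" "(b - a) \<bullet> p = (b - a) \<bullet> r" "(b - a) \<bullet> q = (b - a) \<bullet> r"
      "u \<bullet> q < u \<bullet> p" "u \<bullet> p < M"
  shows False
proof -
  define d where "d = b - a"
  have d: "d \<noteq> 0" "u \<bullet> d = 0" using ab by (auto simp: d_def inner_diff_right)
  define lam where "lam = (M - u \<bullet> p) / (M - u \<bullet> q)"
  have l: "0 < lam" "lam < 1" using pq unfolding lam_def by (auto simp: field_simps)
  have ur: "u \<bullet> r = M" unfolding mu(3) using ab by (simp add: inner_add_right algebra_simps)
  have "p = (1 - lam) *\<^sub>R r + lam *\<^sub>R q"
  proof (rule eq2d[OF u d(1) d(2)])
    have "u \<bullet> ((1 - lam) *\<^sub>R r + lam *\<^sub>R q) = M - lam * (M - u \<bullet> q)"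
      using ur by (simp add: inner_add_right algebra_simps)
    also have "\<dots> = u \<bullet> p" using pq unfolding lam_def by (simp add: field_simps)
    finally show "u \<bullet> p = u \<bullet> ((1 - lam) *\<^sub>R r + lam *\<^sub>R q)" by simp
    have dq: "d \<bullet> q = d \<bullet> r" "d \<bullet> p = d \<bullet> r" using pq unfolding d_def by auto
    have "d \<bullet> ((1 - lam) *\<^sub>R r + lam *\<^sub>R q) = (1 - lam) * (d \<bullet> r) + lam * (d \<bullet> q)"
      by (simp add: inner_add_right)
    also have "\<dots> = d \<bullet> r" using dq by (simp add: algebra_simps)
    finally show "d \<bullet> p = d \<bullet> ((1 - lam) *\<^sub>R r + lam *\<^sub>R q)" using dq by simp
  qed
  then have pe: "p = ((1 - lam) * (1 - \<mu>)) *\<^sub>R a + ((1 - lam) * \<mu>) *\<^sub>R b + lam *\<^sub>R q"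
    using mu by (simp add: algebra_simps scaleR_add_right)
  have sG: "set [a, b, p, q] \<subseteq> \<Gamma>" using ab(1,2) pq(1,2) by simp
  have sL: "length [a, b, p, q] \<le> 6" by simp
  obtain K where K: "cs_convex_body K" "set [a, b, p, q] \<subseteq> frontier K"
    using get_K[OF sc hyp sG sL] by blast
  have fK: "frontier K \<subseteq> K" using K(1) unfolding cs_convex_body_def
    by (simp add: compact_imp_closed frontier_subset_closed)
  have inK: "a \<in> K" "b \<in> K" "q \<in> K" "p \<in> frontier K" using K fK by auto
  have pos: "(1 - lam) * (1 - \<mu>) > 0" "(1 - lam) * \<mu> > 0" using l mu by auto
  have sum1: "(1 - lam) * (1 - \<mu>) + (1 - lam) * \<mu> + lam = 1" by (simp add: algebra_simps)
  have uq: "u \<bullet> q < M" using pq by linarith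
  show False
    by (rule interior_contra[OF K(1) inK(4) inK(1,2,3) pos l(1) sum1 pe u ab(3,4,5) uq])
qed



lemma gap_contra:
  fixes u a b r :: "real^2"
  assumes sc: "simple_closed_curve \<Gamma>"
    and hyp: "\<And>S. S \<subseteq> \<Gamma> \<Longrightarrow> finite S \<Longrightarrow> card S = 6 \<Longrightarrow> csc_position S"
    and u: "u \<noteq> 0" and sub: "\<Gamma> \<subseteq> {x. u \<bullet> x \<le> M}"
    and ab: "a \<in> \<Gamma>" "b \<in> \<Gamma>" "u \<bullet> a = M" "u \<bullet> b = M" "a \<noteq> b"
    and mu: "0 < \<mu>" "\<mu> < 1" "r = (1 - \<mu>) *\<^sub>R a + \<mu> *\<^sub>R b"
    and rn: "r \<notin> \<Gamma>"
  shows False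
proof -
  obtain g where g: "simple_path g" "pathfinish g = pathstart g" "path_image g = \<Gamma>" "g 0 = a"
    using reparam[OF sc ab(1)] by blast
  have g1: "g 1 = a" using g(2,4) unfolding pathfinish_def pathstart_def by simp
  obtain t where t: "t \<in> {0..1}" "g t = b" using ab(2) g(3) unfolding path_image_def by auto
  have t0: "t \<noteq> 0" "t \<noteq> 1" using t g(4) g1 ab(5) by auto
  define d where "d = b - a"
  have d: "d \<noteq> 0" "u \<bullet> d = 0" using ab by (auto simp: d_def inner_diff_right)
  have dd: "d \<bullet> d > 0" using d(1) by simp
  define f where "f = (\<lambda>\<tau>. d \<bullet> g \<tau>)"
  have cf: "continuous_on {0..1} f" unfolding f_def
    using g(1) unfolding simple_path_def path_def by (intro continuous_intros) auto
  have dr: "d \<bullet> r = d \<bullet> a + \<mu> * (d \<bullet> d)" unfolding mu(3) d_def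
    by (simp add: inner_add_right inner_diff_left inner_diff_right algebra_simps)
  have db: "d \<bullet> b = d \<bullet> a + d \<bullet> d" unfolding d_def
    by (simp add: inner_diff_left inner_diff_right algebra_simps)
  have f0: "f 0 < d \<bullet> r" "f 1 < d \<bullet> r" using dr dd mu g(4) g1 unfolding f_def by auto
  have "\<mu> * (d \<bullet> d) < d \<bullet> d" using mult_strict_right_mono[OF mu(2) dd] by simp
  then have ft: "d \<bullet> r < f t" unfolding f_def using dr db t(2) by simp
  obtain \<tau>1 where t1: "0 \<le> \<tau>1" "\<tau>1 \<le> t" "f \<tau>1 = d \<bullet> r"
    using IVT'[of f 0 "d \<bullet> r" t] f0 ft t cf continuous_on_subset[of "{0..1}" f "{0..t}"] by force
  obtain \<tau>2 where t2: "t \<le> \<tau>2" "\<tau>2 \<le> 1" "f \<tau>2 = d \<bullet> r"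
    using IVT2'[of f 1 "d \<bullet> r" t] f0 ft t cf continuous_on_subset[of "{0..1}" f "{t..1}"] by force
  have ne: "\<tau>1 \<noteq> t" "\<tau>2 \<noteq> t" "\<tau>1 \<noteq> 0" "\<tau>2 \<noteq> 1" using t1 t2 ft f0 by auto
  have i1: "\<tau>1 \<in> {0<..<1}" using t1 ne t by auto
  have i2: "\<tau>2 \<in> {0..1}" "\<tau>1 \<noteq> \<tau>2" using t2 ne t t1 by auto
  define p1 where "p1 = g \<tau>1"
  define p2 where "p2 = g \<tau>2"
  have pne: "p1 \<noteq> p2" unfolding p1_def p2_def using lf[OF g(1) i1 i2] .
  have pG: "p1 \<in> \<Gamma>" "p2 \<in> \<Gamma>" using g(3) i1 i2 unfolding p1_def p2_def path_image_def by auto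
  have pd: "d \<bullet> p1 = d \<bullet> r" "d \<bullet> p2 = d \<bullet> r" using t1 t2 unfolding p1_def p2_def f_def by auto
  have ur: "u \<bullet> r = M" unfolding mu(3) using ab by (simp add: inner_add_right algebra_simps)
  have lt: "u \<bullet> p1 < M" "u \<bullet> p2 < M"
  proof -
    have "u \<bullet> p1 \<noteq> M"
    proof
      assume "u \<bullet> p1 = M"
      then have "p1 = r" using eq2d[OF u d(1) d(2)] pd ur by auto
      then show False using pG rn by auto
    qed
    moreover have "u \<bullet> p2 \<noteq> M"
    proof
      assume "u \<bullet> p2 = M"
      then have "p2 = r" using eq2d[OF u d(1) d(2)] pd ur by auto
      then show False using pG rn by auto
    qed
    ultimately show "u \<bullet> p1 < M" "u \<bullet> p2 < M" using sub pG by force+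
  qed
  have "u \<bullet> p1 \<noteq> u \<bullet> p2"
  proof
    assume "u \<bullet> p1 = u \<bullet> p2"
    then have "p1 = p2" using eq2d[OF u d(1) d(2)] pd by auto
    then show False using pne by simp
  qed
  then consider "u \<bullet> p2 < u \<bullet> p1" | "u \<bullet> p1 < u \<bullet> p2" by linarith
  then show False
  proof cases
    case 1
    show False
      by (rule gap_inner[OF sc hyp u ab mu pG(1) pG(2) pd(1)[unfolded d_def] pd(2)[unfolded d_def] 1 lt(1)])
  next
    case 2
    show False
      by (rule gap_inner[OF sc hyp u ab mu pG(2) pG(1) pd(2)[unfolded d_def] pd(1)[unfolded d_def] 2 lt(2)])
  qed
qed

lemma seg:
  fixes u :: "real^2"
  assumes sc: "simple_closed_curve \<Gamma>"
    and hyp: "\<And>S. S \<subseteq> \<Gamma> \<Longrightarrow> finite S \<Longrightarrow> card S = 6 \<Longrightarrow> csc_position S"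
    and u: "u \<noteq> 0" and sub: "\<Gamma> \<subseteq> {x. u \<bullet> x \<le> M}"
    and ne: "{x. u \<bullet> x = M} \<inter> \<Gamma> \<noteq> {}"
  shows "\<exists>a b. {x. u \<bullet> x = M} \<inter> \<Gamma> = closed_segment a b"
proof -
  define T where "T = {x. u \<bullet> x = M} \<inter> \<Gamma>"
  obtain g where g: "simple_path g" "path_image g = \<Gamma>" using sc unfolding simple_closed_curve_def by blast
  have "compact \<Gamma>" using g compact_simple_path_image by blast
  then have cT: "compact T" unfolding T_def using closed_hyperplane[of u M] compact_Int_closed[of \<Gamma> "{x. u \<bullet> x = M}"]
    by (simp add: Int_commute)
  obtain v where v: "v \<noteq> 0" "u \<bullet> v = 0" using perp_exists[OF u] by blast
  have cv: "continuous_on T (\<lambda>x. v \<bullet> x)" by (intro continuous_intros)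
  obtain a where a: "a \<in> T" "\<forall>y\<in>T. v \<bullet> a \<le> v \<bullet> y"
    using continuous_attains_inf[OF cT _ cv] ne T_def by blast
  obtain b where b: "b \<in> T" "\<forall>y\<in>T. v \<bullet> y \<le> v \<bullet> b"
    using continuous_attains_sup[OF cT _ cv] ne T_def by blast
  have "T = closed_segment a b"
  proof
    show "T \<subseteq> closed_segment a b"
    proof
      fix y assume y: "y \<in> T"
      show "y \<in> closed_segment a b"
      proof (cases "v \<bullet> a = v \<bullet> b")
        case True
        then have "v \<bullet> y = v \<bullet> a" using a b y by force
        then have "y = a" using eq2d[OF u v(1) v(2)] y a unfolding T_def by auto
        then show ?thesis by simp
      next
        case False
        then have lt: "v \<bullet> a < v \<bullet> b" using a b by force
        define \<mu> where "\<mu> = (v \<bullet> y - v \<bullet> a) / (v \<bullet> b - v \<bullet> a)"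
        have m01: "0 \<le> \<mu>" "\<mu> \<le> 1" using a b y lt unfolding \<mu>_def by (auto simp: field_simps)
        have "y = (1 - \<mu>) *\<^sub>R a + \<mu> *\<^sub>R b"
        proof (rule eq2d[OF u v(1) v(2)])
          show "u \<bullet> y = u \<bullet> ((1 - \<mu>) *\<^sub>R a + \<mu> *\<^sub>R b)"
            using a b y unfolding T_def by (simp add: inner_add_right algebra_simps)
          have "v \<bullet> ((1 - \<mu>) *\<^sub>R a + \<mu> *\<^sub>R b) = v \<bullet> a + \<mu> * (v \<bullet> b - v \<bullet> a)"
            by (simp add: inner_add_right algebra_simps)
          also have "\<dots> = v \<bullet> y" using lt unfolding \<mu>_def by (simp add: field_simps)
          finally show "v \<bullet> y = v \<bullet> ((1 - \<mu>) *\<^sub>R a + \<mu> *\<^sub>R b)" by simp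
        qed
        then show ?thesis using m01 unfolding closed_segment_def by blast
      qed
    qed
    show "closed_segment a b \<subseteq> T"
    proof
      fix z assume "z \<in> closed_segment a b"
      then obtain \<mu> where m: "z = (1 - \<mu>) *\<^sub>R a + \<mu> *\<^sub>R b" "0 \<le> \<mu>" "\<mu> \<le> 1"
        unfolding closed_segment_def by blast
      have uz: "u \<bullet> z = M" using a b unfolding m(1) T_def by (simp add: inner_add_right algebra_simps)
      have "z \<in> \<Gamma>"
      proof (cases "\<mu> = 0 \<or> \<mu> = 1 \<or> a = b")
        case True
        then show ?thesis using a b m unfolding T_def by auto
      next
        case False
        show ?thesis
        proof (rule ccontr)
          assume "z \<notin> \<Gamma>"
          have abT: "a \<in> \<Gamma>" "b \<in> \<Gamma>" "u \<bullet> a = M" "u \<bullet> b = M" using a(1) b(1) unfolding T_def by auto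
          have mm: "0 < \<mu>" "\<mu> < 1" "a \<noteq> b" using False m(2,3) by auto
          show False
            by (rule gap_contra[OF sc hyp u sub abT mm(3) mm(1,2) m(1) \<open>z \<notin> \<Gamma>\<close>])
        qed
      qed
      then show "z \<in> T" using uz unfolding T_def by simp
    qed
  qed
  then show ?thesis unfolding T_def by blast
qed



lemma seg_dist:
  fixes a b x y :: "real^2"
  assumes "x \<in> closed_segment a b" "y \<in> closed_segment a b"
  shows "dist x y \<le> dist a b"
proof -
  obtain s where s: "x = (1 - s) *\<^sub>R a + s *\<^sub>R b" "0 \<le> s" "s \<le> 1" using assms(1) unfolding closed_segment_def by blast
  obtain t where t: "y = (1 - t) *\<^sub>R a + t *\<^sub>R b" "0 \<le> t" "t \<le> 1" using assms(2) unfolding closed_segment_def by blast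
  have "x - y = (t - s) *\<^sub>R (a - b)" unfolding s(1) t(1) by (simp add: algebra_simps)
  then have "dist x y = \<bar>t - s\<bar> * dist a b" by (simp add: dist_norm)
  also have "\<dots> \<le> 1 * dist a b" using s t by (intro mult_right_mono) auto
  finally show ?thesis by simp
qed

lemma arc_exit_right:
  fixes f :: "real \<Rightarrow> real" and G :: "real \<Rightarrow> real^2"
  assumes ab: "\<alpha> < \<beta>" and cf: "continuous_on {\<alpha>..\<beta>} f" and cG: "continuous_on {\<alpha>..\<beta>} G"
    and fa: "f \<alpha> = m" and fb: "f \<beta> > m" and ge: "\<forall>x\<in>{\<alpha>..\<beta>}. f x \<ge> m" and e: "\<epsilon> > 0"
  shows "\<exists>\<eta>>0. \<forall>\<delta>. 0 < \<delta> \<and> \<delta> < \<eta> \<longrightarrow>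
     (\<exists>\<tau>\<in>{\<alpha><..<\<beta>}. f \<tau> = m + \<delta> \<and> (\<exists>\<tau>0\<in>{\<alpha>..\<beta>}. f \<tau>0 = m \<and> dist (G \<tau>) (G \<tau>0) < \<epsilon>))"
proof -
  define Z where "Z = {x \<in> {\<alpha>..\<beta>}. f x = m}"
  have cZ: "closed Z" unfolding Z_def by (rule continuous_closed_preimage_constant[OF cf]) simp
  have "\<alpha> \<in> Z" using fa ab unfolding Z_def by auto
  have nZ: "Z \<noteq> {}" "bdd_above Z" using \<open>\<alpha> \<in> Z\<close> unfolding Z_def by (auto intro: bdd_aboveI[of _ \<beta>])
  define t0 where "t0 = Sup Z"
  have t0Z: "t0 \<in> Z" unfolding t0_def using closed_contains_Sup[OF nZ(1) nZ(2) cZ] .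
  have t0i: "\<alpha> \<le> t0" "t0 \<le> \<beta>" "f t0 = m" using t0Z unfolding Z_def by auto
  have t0b: "t0 < \<beta>" using t0i fb by (cases "t0 = \<beta>") auto
  have after: "f x > m" if "t0 < x" "x \<le> \<beta>" for x
  proof -
    have "x \<notin> Z" using that cSup_upper[OF _ nZ(2)] unfolding t0_def by force
    then have "f x \<noteq> m" using that t0i unfolding Z_def by auto
    moreover have "f x \<ge> m" using ge that t0i by auto
    ultimately show ?thesis by simp
  qed
  obtain \<rho> where rho: "\<rho> > 0" "\<forall>x'\<in>{\<alpha>..\<beta>}. dist x' t0 < \<rho> \<longrightarrow> dist (G x') (G t0) < \<epsilon>"
    using cG e t0i unfolding continuous_on_iff by (meson atLeastAtMost_iff)
  define t1 where "t1 = min (t0 + \<rho>/2) \<beta>"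
  have t1: "t0 < t1" "t1 \<le> \<beta>" "t1 < t0 + \<rho>" using t0b rho unfolding t1_def by auto
  have ft1: "f t1 > m" using after t1 by auto
  show ?thesis
  proof (intro exI[of _ "f t1 - m"] conjI allI impI)
    show "f t1 - m > 0" using ft1 by simp
    fix \<delta> assume d: "0 < \<delta> \<and> \<delta> < f t1 - m"
    have "continuous_on {t0..t1} f" by (rule continuous_on_subset[OF cf]) (use t0i t1 in auto)
    then obtain \<tau> where tau: "t0 \<le> \<tau>" "\<tau> \<le> t1" "f \<tau> = m + \<delta>"
      using IVT'[of f t0 "m + \<delta>" t1] t0i d t1 by auto
    have "\<tau> \<noteq> t0" "\<tau> \<noteq> t1" using tau t0i d by auto
    then have ti: "\<tau> \<in> {\<alpha><..<\<beta>}" using tau t0i t1 by auto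
    have dG: "dist (G \<tau>) (G t0) < \<epsilon>" using rho(2) ti tau t1 by (auto simp: dist_real_def)
    have t0ab: "t0 \<in> {\<alpha>..\<beta>}" using t0i by auto
    show "\<exists>\<tau>\<in>{\<alpha><..<\<beta>}. f \<tau> = m + \<delta> \<and> (\<exists>\<tau>0\<in>{\<alpha>..\<beta>}. f \<tau>0 = m \<and> dist (G \<tau>) (G \<tau>0) < \<epsilon>)"
      using ti tau(3) t0i(3) t0ab dG by blast
  qed
qed

lemma arc_exit_left:
  fixes f :: "real \<Rightarrow> real" and G :: "real \<Rightarrow> real^2"
  assumes ab: "\<alpha> < \<beta>" and cf: "continuous_on {\<alpha>..\<beta>} f" and cG: "continuous_on {\<alpha>..\<beta>} G"
    and fa: "f \<alpha> > m" and fb: "f \<beta> = m" and ge: "\<forall>x\<in>{\<alpha>..\<beta>}. f x \<ge> m" and e: "\<epsilon> > 0"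
  shows "\<exists>\<eta>>0. \<forall>\<delta>. 0 < \<delta> \<and> \<delta> < \<eta> \<longrightarrow>
     (\<exists>\<tau>\<in>{\<alpha><..<\<beta>}. f \<tau> = m + \<delta> \<and> (\<exists>\<tau>0\<in>{\<alpha>..\<beta>}. f \<tau>0 = m \<and> dist (G \<tau>) (G \<tau>0) < \<epsilon>))"
proof -
  define Z where "Z = {x \<in> {\<alpha>..\<beta>}. f x = m}"
  have cZ: "closed Z" unfolding Z_def by (rule continuous_closed_preimage_constant[OF cf]) simp
  have "\<beta> \<in> Z" using fb ab unfolding Z_def by auto
  have nZ: "Z \<noteq> {}" "bdd_below Z" using \<open>\<beta> \<in> Z\<close> unfolding Z_def by (auto intro: bdd_belowI[of _ \<alpha>])
  define t0 where "t0 = Inf Z"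
  have t0Z: "t0 \<in> Z" unfolding t0_def using closed_contains_Inf[OF nZ(1) nZ(2) cZ] .
  have t0i: "\<alpha> \<le> t0" "t0 \<le> \<beta>" "f t0 = m" using t0Z unfolding Z_def by auto
  have t0b: "\<alpha> < t0" using t0i fa by (cases "t0 = \<alpha>") auto
  have before: "f x > m" if "x < t0" "\<alpha> \<le> x" for x
  proof -
    have "x \<notin> Z" using that cInf_lower[OF _ nZ(2)] unfolding t0_def by force
    then have "f x \<noteq> m" using that t0i unfolding Z_def by auto
    moreover have "f x \<ge> m" using ge that t0i by auto
    ultimately show ?thesis by simp
  qed
  obtain \<rho> where rho: "\<rho> > 0" "\<forall>x'\<in>{\<alpha>..\<beta>}. dist x' t0 < \<rho> \<longrightarrow> dist (G x') (G t0) < \<epsilon>"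
    using cG e t0i unfolding continuous_on_iff by (meson atLeastAtMost_iff)
  define t1 where "t1 = max (t0 - \<rho>/2) \<alpha>"
  have t1: "t1 < t0" "\<alpha> \<le> t1" "t0 - \<rho> < t1" using t0b rho unfolding t1_def by auto
  have ft1: "f t1 > m" using before t1 by auto
  show ?thesis
  proof (intro exI[of _ "f t1 - m"] conjI allI impI)
    show "f t1 - m > 0" using ft1 by simp
    fix \<delta> assume d: "0 < \<delta> \<and> \<delta> < f t1 - m"
    have "continuous_on {t1..t0} f" by (rule continuous_on_subset[OF cf]) (use t0i t1 in auto)
    then obtain \<tau> where tau: "t1 \<le> \<tau>" "\<tau> \<le> t0" "f \<tau> = m + \<delta>"
      using IVT2'[of f t0 "m + \<delta>" t1] t0i d t1 by auto
    have "\<tau> \<noteq> t0" "\<tau> \<noteq> t1" using tau t0i d by auto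
    then have ti: "\<tau> \<in> {\<alpha><..<\<beta>}" using tau t0i t1 by auto
    have dG: "dist (G \<tau>) (G t0) < \<epsilon>" using rho(2) ti tau t1 by (auto simp: dist_real_def)
    have t0ab: "t0 \<in> {\<alpha>..\<beta>}" using t0i by auto
    show "\<exists>\<tau>\<in>{\<alpha><..<\<beta>}. f \<tau> = m + \<delta> \<and> (\<exists>\<tau>0\<in>{\<alpha>..\<beta>}. f \<tau>0 = m \<and> dist (G \<tau>) (G \<tau>0) < \<epsilon>)"
      using ti tau(3) t0i(3) t0ab dG by blast
  qed
qed

lemma bottom_narrow:
  fixes u a a' b' :: "real^2"
  assumes sc: "simple_closed_curve \<Gamma>"
    and u: "u \<noteq> 0" and sub: "\<Gamma> \<subseteq> {x. m \<le> u \<bullet> x \<and> u \<bullet> x \<le> M}" and mM: "m < M"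
    and top: "a \<in> \<Gamma>" "u \<bullet> a = M"
    and B: "{x. u \<bullet> x = m} \<inter> \<Gamma> = closed_segment a' b'" and e: "\<epsilon> > 0"
  shows "\<exists>\<delta> x1 x3. m < \<delta> \<and> \<delta> < M \<and> x1 \<in> \<Gamma> \<and> x3 \<in> \<Gamma> \<and> x1 \<noteq> x3 \<and> u \<bullet> x1 = \<delta> \<and> u \<bullet> x3 = \<delta>
     \<and> dist x1 x3 < dist a' b' + 2 * \<epsilon>"
proof -
  obtain g where g: "simple_path g" "pathfinish g = pathstart g" "path_image g = \<Gamma>" "g 0 = a"
    using reparam[OF sc top(1)] by blast
  have g1: "g 1 = a" using g(2,4) unfolding pathfinish_def pathstart_def by simp
  have a'B: "a' \<in> {x. u \<bullet> x = m} \<inter> \<Gamma>" using B by simp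
  obtain \<sigma> where s: "\<sigma> \<in> {0..1}" "g \<sigma> = a'" using a'B g(3) unfolding path_image_def by auto
  have "\<sigma> \<noteq> 0" "\<sigma> \<noteq> 1" using s g(4) g1 top a'B mM by auto
  then have s01: "0 < \<sigma>" "\<sigma> < 1" using s by auto
  define f where "f = (\<lambda>\<tau>. u \<bullet> g \<tau>)"
  have cg: "continuous_on {0..1} g" using g(1) unfolding simple_path_def path_def by auto
  have cf: "continuous_on {0..1} f" unfolding f_def using cg by (intro continuous_intros) auto
  have gG: "g \<tau> \<in> \<Gamma>" if "\<tau> \<in> {0..1}" for \<tau> using g(3) that unfolding path_image_def by auto
  have ge: "\<forall>x\<in>{0..1}. f x \<ge> m" using sub gG unfolding f_def by force
  have fs: "f \<sigma> = m" using s a'B unfolding f_def by auto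
  have f01: "f 0 = M" "f 1 = M" using top g(4) g1 unfolding f_def by auto
  obtain \<eta>1 where e1: "\<eta>1 > 0" "\<forall>\<delta>. 0 < \<delta> \<and> \<delta> < \<eta>1 \<longrightarrow>
     (\<exists>\<tau>\<in>{0<..<\<sigma>}. f \<tau> = m + \<delta> \<and> (\<exists>\<tau>0\<in>{0..\<sigma>}. f \<tau>0 = m \<and> dist (g \<tau>) (g \<tau>0) < \<epsilon>))"
    using arc_exit_left[of 0 \<sigma> f g m \<epsilon>] s01 cf cg fs f01 mM ge e
      continuous_on_subset[of "{0..1}" f "{0..\<sigma>}"] continuous_on_subset[of "{0..1}" g "{0..\<sigma>}"] by force
  obtain \<eta>2 where e2: "\<eta>2 > 0" "\<forall>\<delta>. 0 < \<delta> \<and> \<delta> < \<eta>2 \<longrightarrow>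
     (\<exists>\<tau>\<in>{\<sigma><..<1}. f \<tau> = m + \<delta> \<and> (\<exists>\<tau>0\<in>{\<sigma>..1}. f \<tau>0 = m \<and> dist (g \<tau>) (g \<tau>0) < \<epsilon>))"
    using arc_exit_right[of \<sigma> 1 f g m \<epsilon>] s01 cf cg fs f01 mM ge e
      continuous_on_subset[of "{0..1}" f "{\<sigma>..1}"] continuous_on_subset[of "{0..1}" g "{\<sigma>..1}"] by force
  define \<delta> where "\<delta> = min (min \<eta>1 \<eta>2) (M - m) / 2"
  have d: "0 < \<delta>" "\<delta> < \<eta>1" "\<delta> < \<eta>2" "\<delta> < M - m" using e1(1) e2(1) mM unfolding \<delta>_def by auto
  obtain \<tau>1 \<tau>01 where T1: "\<tau>1 \<in> {0<..<\<sigma>}" "f \<tau>1 = m + \<delta>" "\<tau>01 \<in> {0..\<sigma>}" "f \<tau>01 = m"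
      "dist (g \<tau>1) (g \<tau>01) < \<epsilon>"
    using e1(2) d by blast
  obtain \<tau>2 \<tau>02 where T2: "\<tau>2 \<in> {\<sigma><..<1}" "f \<tau>2 = m + \<delta>" "\<tau>02 \<in> {\<sigma>..1}" "f \<tau>02 = m"
      "dist (g \<tau>2) (g \<tau>02) < \<epsilon>"
    using e2(2) d by blast
  have i1: "\<tau>1 \<in> {0<..<1}" using T1 s01 by auto
  have i2: "\<tau>2 \<in> {0..1}" "\<tau>1 \<noteq> \<tau>2" using T1 T2 s01 by auto
  have ne: "g \<tau>1 \<noteq> g \<tau>2" using lf[OF g(1) i1 i2] .
  have y1: "g \<tau>01 \<in> closed_segment a' b'" using T1 s01 gG[of \<tau>01] B unfolding f_def by auto
  have y2: "g \<tau>02 \<in> closed_segment a' b'" using T2 s01 gG[of \<tau>02] B unfolding f_def by auto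
  have "dist (g \<tau>1) (g \<tau>2) \<le> dist (g \<tau>1) (g \<tau>01) + dist (g \<tau>01) (g \<tau>02) + dist (g \<tau>02) (g \<tau>2)"
    using dist_triangle[of "g \<tau>1" "g \<tau>2" "g \<tau>01"] dist_triangle[of "g \<tau>01" "g \<tau>2" "g \<tau>02"] by linarith
  also have "\<dots> < \<epsilon> + dist a' b' + \<epsilon>"
    using T1(5) T2(5) seg_dist[OF y1 y2] by (simp add: dist_commute)
  finally have dd: "dist (g \<tau>1) (g \<tau>2) < dist a' b' + 2 * \<epsilon>" by simp
  show ?thesis
    by (rule exI[of _ "m + \<delta>"], rule exI[of _ "g \<tau>1"], rule exI[of _ "g \<tau>2"])
       (use d gG i1 i2 ne T1(2) T2(2) dd in \<open>auto simp: f_def\<close>)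
qed


lemma line_contra:
  fixes u d P p y1 y2 :: "real^2"
  assumes K: "cs_convex_body K" and u: "u \<noteq> 0" and d: "d \<noteq> 0" "u \<bullet> d = 0"
    and p: "P + t *\<^sub>R d \<in> frontier K" and q: "P + r1 *\<^sub>R d \<in> K" "P + r2 *\<^sub>R d \<in> K"
    and r: "r1 < t" "t < r2"
    and y: "y1 \<in> K" "y2 \<in> K" "u \<bullet> y1 > u \<bullet> P" "u \<bullet> y2 < u \<bullet> P"
  shows False
proof -
  define \<mu> where "\<mu> = (t - r1) / (r2 - r1)"
  have m: "0 < \<mu>" "\<mu> < 1" using r unfolding \<mu>_def by (auto simp: field_simps)
  have "(1 - \<mu>) * r1 + \<mu> * r2 = r1 + \<mu> * (r2 - r1)" by (simp add: algebra_simps)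
  also have "\<mu> * (r2 - r1) = t - r1" using r unfolding \<mu>_def by simp
  finally have tt: "(1 - \<mu>) * r1 + \<mu> * r2 = t" by simp
  have "(1 - \<mu>) *\<^sub>R (P + r1 *\<^sub>R d) + \<mu> *\<^sub>R (P + r2 *\<^sub>R d) = P + ((1 - \<mu>) * r1 + \<mu> * r2) *\<^sub>R d"
    by (simp add: algebra_simps)
  then have pe: "P + t *\<^sub>R d = (1 - \<mu>) *\<^sub>R (P + r1 *\<^sub>R d) + \<mu> *\<^sub>R (P + r2 *\<^sub>R d)"
    using tt by simp
  have ne: "P + r1 *\<^sub>R d \<noteq> P + r2 *\<^sub>R d" using r d by auto
  have uq: "u \<bullet> (P + r1 *\<^sub>R d) = u \<bullet> (P + r2 *\<^sub>R d)" using d by (simp add: inner_add_right)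
  have up: "u \<bullet> (P + t *\<^sub>R d) = u \<bullet> P" using d by (simp add: inner_add_right)
  from flat[OF K p q pe m u uq ne] show False using y up by force
qed

lemma width:
  fixes u a b a' b' :: "real^2"
  assumes sc: "simple_closed_curve \<Gamma>"
    and hyp: "\<And>S. S \<subseteq> \<Gamma> \<Longrightarrow> finite S \<Longrightarrow> card S = 6 \<Longrightarrow> csc_position S"
    and u: "u \<noteq> 0" and sub: "\<Gamma> \<subseteq> {x. m \<le> u \<bullet> x \<and> u \<bullet> x \<le> M}" and mM: "m < M"
    and T: "{x. u \<bullet> x = M} \<inter> \<Gamma> = closed_segment a b"
    and B: "{x. u \<bullet> x = m} \<inter> \<Gamma> = closed_segment a' b'"
  shows "\<not> dist a' b' < dist a b"
proof
  assume lt: "dist a' b' < dist a b"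
  define \<epsilon> where "\<epsilon> = (dist a b - dist a' b') / 3"
  have e: "\<epsilon> > 0" using lt unfolding \<epsilon>_def by simp
  have aT: "a \<in> \<Gamma>" "u \<bullet> a = M" "b \<in> \<Gamma>" "u \<bullet> b = M" using T ends_in_segment[of a b] by blast+
  have a'B: "a' \<in> \<Gamma>" "u \<bullet> a' = m" using B ends_in_segment[of a' b'] by blast+
  obtain \<delta> x1 x3 where X: "m < \<delta>" "\<delta> < M" "x1 \<in> \<Gamma>" "x3 \<in> \<Gamma>" "x1 \<noteq> x3" "u \<bullet> x1 = \<delta>" "u \<bullet> x3 = \<delta>"
      "dist x1 x3 < dist a' b' + 2 * \<epsilon>"
    using bottom_narrow[OF sc u sub mM aT(1,2) B e] by blast
  have "dist a' b' + 2 * \<epsilon> < dist a b" unfolding \<epsilon>_def using lt by (simp add: field_simps)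
  then have x13: "dist x1 x3 < dist a b" using X(8) by linarith
  have ab: "a \<noteq> b" using lt by auto
  define mid where "mid = (1 - 1/2) *\<^sub>R a + (1/2::real) *\<^sub>R b"
  have "mid \<in> closed_segment a b" unfolding mid_def closed_segment_def
    by (rule CollectI, rule exI[of _ "1/2"]) simp
  then have midG: "mid \<in> \<Gamma>" "u \<bullet> mid = M" using T by blast+
  have sG: "set [a, b, mid, a', x1, x3] \<subseteq> \<Gamma>" using aT midG a'B X by simp
  have sL: "length [a, b, mid, a', x1, x3] \<le> 6" by simp
  obtain K where K: "cs_convex_body K" "set [a, b, mid, a', x1, x3] \<subseteq> frontier K"
    using get_K[OF sc hyp sG sL] by blast
  have fK: "frontier K \<subseteq> K" using K(1) unfolding cs_convex_body_def
    by (simp add: compact_imp_closed frontier_subset_closed)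
  have inK: "a \<in> K" "b \<in> K" "a' \<in> K" "x1 \<in> K" "x3 \<in> K" using K(2) fK by auto
  have fr: "mid \<in> frontier K" "x1 \<in> frontier K" "x3 \<in> frontier K" using K(2) by auto
  have cK: "convex K" using K(1) unfolding cs_convex_body_def by auto
  obtain c where c: "\<forall>x\<in>K. 2 *\<^sub>R c - x \<in> K" using K(1) unfolding cs_convex_body_def by auto
  have half: "(0::real) < 1/2" "(1/2::real) < 1" by auto
  have uab: "u \<bullet> a = u \<bullet> b" using aT by simp
  have "(\<forall>y\<in>K. u \<bullet> y \<le> u \<bullet> mid) \<or> (\<forall>y\<in>K. u \<bullet> y \<ge> u \<bullet> mid)"
    by (rule flat[OF K(1) fr(1) inK(1,2) mid_def half u uab ab])
  then have belowM: "\<forall>y\<in>K. u \<bullet> y \<le> M" using inK(3) a'B(2) midG(2) mM by force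
  define M0 where "M0 = 2 * (u \<bullet> c) - M"
  have "2 *\<^sub>R c - a' \<in> K" using c inK(3) by blast
  then have "u \<bullet> (2 *\<^sub>R c - a') \<le> M" using belowM by blast
  then have M0m: "M0 \<le> m" using a'B(2) unfolding M0_def by (simp add: inner_diff_right)
  define as where "as = 2 *\<^sub>R c - b"
  define bs where "bs = 2 *\<^sub>R c - a"
  have sK: "as \<in> K" "bs \<in> K" using c inK unfolding as_def bs_def by auto
  have uas: "u \<bullet> as = M0" "u \<bullet> bs = M0" using aT unfolding as_def bs_def M0_def by (auto simp: inner_diff_right)
  define lam where "lam = (\<delta> - M0) / (M - M0)"
  have l: "0 < lam" "lam < 1" using X(1,2) M0m unfolding lam_def by (auto simp: field_simps)
  define Pa where "Pa = lam *\<^sub>R a + (1 - lam) *\<^sub>R as"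
  define Pb where "Pb = lam *\<^sub>R b + (1 - lam) *\<^sub>R bs"
  have PK: "Pa \<in> K" "Pb \<in> K" unfolding Pa_def Pb_def
    using cK inK sK l by (auto intro: convexD)
  define d where "d = b - a"
  have d: "d \<noteq> 0" "u \<bullet> d = 0" using ab aT unfolding d_def by (auto simp: inner_diff_right)
  have Pbd: "Pb = Pa + 1 *\<^sub>R d" unfolding Pb_def Pa_def as_def bs_def d_def by (simp add: algebra_simps)
  have "u \<bullet> Pa = lam * M + (1 - lam) * M0" unfolding Pa_def using aT uas by (simp add: inner_add_right)
  also have "\<dots> = M0 + lam * (M - M0)" by (simp add: algebra_simps)
  also have "lam * (M - M0) = \<delta> - M0" using X(1,2) M0m unfolding lam_def by simp
  also have "M0 + (\<delta> - M0) = \<delta>" by simp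
  finally have uPa: "u \<bullet> Pa = \<delta>" .
  have dd: "d \<bullet> d \<noteq> 0" using d by simp
  define t1 where "t1 = ((x1 - Pa) \<bullet> d) / (d \<bullet> d)"
  define t3 where "t3 = ((x3 - Pa) \<bullet> d) / (d \<bullet> d)"
  have du: "d \<bullet> u = 0" using d(2) by (simp add: inner_commute)
  have w1: "(x1 - Pa) \<bullet> u = 0" "(x3 - Pa) \<bullet> u = 0" using X(6,7) uPa
    by (simp_all add: inner_diff_left inner_commute[of x1 u] inner_commute[of x3 u] inner_commute[of Pa u])
  have "x1 - Pa = t1 *\<^sub>R d" unfolding t1_def by (rule par2d[OF d(1) du w1(1) u])
  then have x1e: "x1 = Pa + t1 *\<^sub>R d" by (simp add: algebra_simps)
  have "x3 - Pa = t3 *\<^sub>R d" unfolding t3_def by (rule par2d[OF d(1) du w1(2) u])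
  then have x3e: "x3 = Pa + t3 *\<^sub>R d" by (simp add: algebra_simps)
  have "dist x1 x3 = \<bar>t1 - t3\<bar> * norm d" unfolding x1e x3e dist_norm
    by (metis add_diff_cancel_left norm_scaleR real_norm_def scaleR_left_diff_distrib)
  moreover have "dist a b = norm d" unfolding d_def by (simp add: dist_norm norm_minus_commute)
  ultimately have tt: "\<bar>t1 - t3\<bar> < 1" using x13 d by simp
  have t13: "t1 \<noteq> t3" using X(5) x1e x3e by auto
  have Pa0: "Pa = Pa + 0 *\<^sub>R d" by simp
  have yy: "a \<in> K" "bs \<in> K" "u \<bullet> a > u \<bullet> Pa" "u \<bullet> bs < u \<bullet> Pa" using inK sK aT uas uPa X M0m by auto
  have key: False if "s1 \<noteq> s3" "\<bar>s1 - s3\<bar> < 1" "Pa + s1 *\<^sub>R d \<in> frontier K" "Pa + s3 *\<^sub>R d \<in> frontier K"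
    "s1 < s3" for s1 s3
  proof (cases "0 < s1")
    case True
    have q: "Pa + 0 *\<^sub>R d \<in> K" "Pa + s3 *\<^sub>R d \<in> K" using PK that(4) fK by auto
    show False by (rule line_contra[OF K(1) u d that(3) q True that(5) yy])
  next
    case False
    have q: "Pa + s1 *\<^sub>R d \<in> K" "Pa + 1 *\<^sub>R d \<in> K" using PK that(3) fK Pbd by auto
    have "s3 < 1" using False that by linarith
    then show False by (rule line_contra[OF K(1) u d that(4) q that(5) _ yy])
  qed
  have f1: "Pa + t1 *\<^sub>R d \<in> frontier K" "Pa + t3 *\<^sub>R d \<in> frontier K" using fr x1e x3e by auto
  show False
  proof (cases "t1 < t3")
    case True
    show False using key[OF t13 tt f1 True] .
  next
    case False
    then have "t3 < t1" using t13 by simp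
    then show False using key[of t3 t1] t13 tt f1 by (simp add: abs_minus_commute)
  qed
qed

lemma side:
  fixes u :: "real^2"
  assumes sl: "supporting_line \<Gamma> L" and L: "L = {x. u \<bullet> x = c}"
  shows "L \<inter> \<Gamma> \<noteq> {} \<and> (\<Gamma> \<subseteq> {x. u \<bullet> x \<le> c} \<or> \<Gamma> \<subseteq> {x. u \<bullet> x \<ge> c})"
proof -
  obtain u1 c1 where u1: "L = {x. u1 \<bullet> x = c1}" "L \<inter> \<Gamma> \<noteq> {}"
    "\<Gamma> \<subseteq> {x. u1 \<bullet> x \<le> c1} \<or> \<Gamma> \<subseteq> {x. u1 \<bullet> x \<ge> c1}"
    using sl unfolding supporting_line_def by blast
  have "\<Gamma> \<subseteq> {x. u \<bullet> x \<le> c} \<or> \<Gamma> \<subseteq> {x. u \<bullet> x \<ge> c}"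
  proof (rule ccontr)
    assume "\<not> ?thesis"
    then have "\<not> \<Gamma> \<subseteq> {x. u \<bullet> x \<le> c}" "\<not> \<Gamma> \<subseteq> {x. u \<bullet> x \<ge> c}" by auto
    then obtain y z where yz0: "y \<in> \<Gamma>" "z \<in> \<Gamma>" "\<not> u \<bullet> y \<le> c" "\<not> u \<bullet> z \<ge> c" by blast
    then have yz: "y \<in> \<Gamma>" "z \<in> \<Gamma>" "u \<bullet> y > c" "u \<bullet> z < c" by auto
    define lam where "lam = (c - u \<bullet> z) / (u \<bullet> y - u \<bullet> z)"
    have l: "0 < lam" "lam < 1" using yz unfolding lam_def by (auto simp: field_simps)
    define w where "w = (1 - lam) *\<^sub>R z + lam *\<^sub>R y"
    have "u \<bullet> w = u \<bullet> z + lam * (u \<bullet> y - u \<bullet> z)" unfolding w_def by (simp add: inner_add_right algebra_simps)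
    also have "\<dots> = c" using yz unfolding lam_def by (simp add: field_simps)
    finally have "w \<in> L" using L by simp
    then have wc: "u1 \<bullet> w = c1" using u1(1) by simp
    have we: "u1 \<bullet> w = (1 - lam) * (u1 \<bullet> z) + lam * (u1 \<bullet> y)" unfolding w_def by (simp add: inner_add_right)
    have "u1 \<bullet> y = c1"
    proof (cases "\<Gamma> \<subseteq> {x. u1 \<bullet> x \<le> c1}")
      case True
      then have h: "u1 \<bullet> y \<le> c1" "u1 \<bullet> z \<le> c1" using yz by auto
      have "(1 - lam) * (c1 - u1 \<bullet> z) + lam * (c1 - u1 \<bullet> y) = 0" using we wc by (simp add: algebra_simps)
      moreover have "(1 - lam) * (c1 - u1 \<bullet> z) \<ge> 0" "lam * (c1 - u1 \<bullet> y) \<ge> 0" using h l by auto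
      ultimately have "lam * (c1 - u1 \<bullet> y) = 0" by linarith
      then show ?thesis using l by simp
    next
      case False
      then have "\<Gamma> \<subseteq> {x. u1 \<bullet> x \<ge> c1}" using u1(3) by blast
      then have h: "u1 \<bullet> y \<ge> c1" "u1 \<bullet> z \<ge> c1" using yz by auto
      have "(1 - lam) * (u1 \<bullet> z - c1) + lam * (u1 \<bullet> y - c1) = 0" using we wc by (simp add: algebra_simps)
      moreover have "(1 - lam) * (u1 \<bullet> z - c1) \<ge> 0" "lam * (u1 \<bullet> y - c1) \<ge> 0" using h l by auto
      ultimately have "lam * (u1 \<bullet> y - c1) = 0" by linarith
      then show ?thesis using l by simp
    qed
    then have "y \<in> L" using u1(1) by simp
    then show False using L yz by simp
  qed
  then show ?thesis using u1(2) by blast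
qed

lemma core:
  fixes u :: "real^2"
  assumes sc: "simple_closed_curve \<Gamma>"
    and hyp: "\<And>S. S \<subseteq> \<Gamma> \<Longrightarrow> finite S \<Longrightarrow> card S = 6 \<Longrightarrow> csc_position S"
    and u: "u \<noteq> 0" and mM: "m < M" and sub: "\<Gamma> \<subseteq> {x. m \<le> u \<bullet> x \<and> u \<bullet> x \<le> M}"
    and nT: "{x. u \<bullet> x = M} \<inter> \<Gamma> \<noteq> {}" and nB: "{x. u \<bullet> x = m} \<inter> \<Gamma> \<noteq> {}"
  shows "\<exists>a b a' b'. {x. u \<bullet> x = M} \<inter> \<Gamma> = closed_segment a b \<and> {x. u \<bullet> x = m} \<inter> \<Gamma> = closed_segment a' b'
           \<and> dist a b = dist a' b'"
proof -
  have s1: "\<Gamma> \<subseteq> {x. u \<bullet> x \<le> M}" using sub by auto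
  obtain a b where ab: "{x. u \<bullet> x = M} \<inter> \<Gamma> = closed_segment a b" using seg[OF sc hyp u s1 nT] by blast
  have u': "-u \<noteq> 0" using u by simp
  have s2: "\<Gamma> \<subseteq> {x. (-u) \<bullet> x \<le> -m}" using sub by auto
  have eqB: "{x. (-u) \<bullet> x = -m} = {x. u \<bullet> x = m}" by auto
  have eqT: "{x. (-u) \<bullet> x = -M} = {x. u \<bullet> x = M}" by auto
  obtain a' b' where ab': "{x. u \<bullet> x = m} \<inter> \<Gamma> = closed_segment a' b'"
    using seg[OF sc hyp u' s2] nB unfolding eqB by blast
  have "\<not> dist a' b' < dist a b" by (rule width[OF sc hyp u sub mM ab ab'])
  moreover have "\<not> dist a b < dist a' b'"
  proof (rule width[OF sc hyp u'])
    show "\<Gamma> \<subseteq> {x. -M \<le> (-u) \<bullet> x \<and> (-u) \<bullet> x \<le> -m}" using sub by auto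
    show "-M < -m" using mM by simp
    show "{x. (-u) \<bullet> x = -m} \<inter> \<Gamma> = closed_segment a' b'" using ab' eqB by simp
    show "{x. (-u) \<bullet> x = -M} \<inter> \<Gamma> = closed_segment a b" using ab eqT by simp
  qed
  ultimately show ?thesis using ab ab' by (intro exI[of _ a] exI[of _ b] exI[of _ a'] exI[of _ b']) auto
qed

theorem mainTheorem8:
  fixes \<Gamma> L L' :: "(real^2) set"
  assumes "simple_closed_curve \<Gamma>"
    and "\<And>S. S \<subseteq> \<Gamma> \<Longrightarrow> finite S \<Longrightarrow> card S = 6 \<Longrightarrow> csc_position S"
    and "supporting_line \<Gamma> L" and "supporting_line \<Gamma> L'"
    and "parallel_lines L L'" and "L \<noteq> L'"
  shows "\<exists>a b a' b'. L \<inter> \<Gamma> = closed_segment a b \<and> L' \<inter> \<Gamma> = closed_segment a' b'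
           \<and> dist a b = dist a' b'"
proof -
  obtain u c c' where u: "u \<noteq> 0" "L = {x. u \<bullet> x = c}" "L' = {x. u \<bullet> x = c'}"
    using assms(5) unfolding parallel_lines_def by blast
  have cc: "c \<noteq> c'" using u assms(6) by auto
  have sL: "L \<inter> \<Gamma> \<noteq> {}" "\<Gamma> \<subseteq> {x. u \<bullet> x \<le> c} \<or> \<Gamma> \<subseteq> {x. u \<bullet> x \<ge> c}"
    using side[OF assms(3) u(2)] by auto
  have sL': "L' \<inter> \<Gamma> \<noteq> {}" "\<Gamma> \<subseteq> {x. u \<bullet> x \<le> c'} \<or> \<Gamma> \<subseteq> {x. u \<bullet> x \<ge> c'}"
    using side[OF assms(4) u(3)] by auto
  have nL: "{x. u \<bullet> x = c} \<inter> \<Gamma> \<noteq> {}" using sL(1) unfolding u(2) .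
  have nL': "{x. u \<bullet> x = c'} \<inter> \<Gamma> \<noteq> {}" using sL'(1) unfolding u(3) .
  obtain y where y: "y \<in> \<Gamma>" "u \<bullet> y = c" using sL(1) u(2) by auto
  obtain y' where y': "y' \<in> \<Gamma>" "u \<bullet> y' = c'" using sL'(1) u(3) by auto
  consider "\<Gamma> \<subseteq> {x. u \<bullet> x \<le> c}" "\<Gamma> \<subseteq> {x. u \<bullet> x \<ge> c'}"
    | "\<Gamma> \<subseteq> {x. u \<bullet> x \<ge> c}" "\<Gamma> \<subseteq> {x. u \<bullet> x \<le> c'}"
    | "\<Gamma> \<subseteq> {x. u \<bullet> x \<le> c}" "\<Gamma> \<subseteq> {x. u \<bullet> x \<le> c'}"
    | "\<Gamma> \<subseteq> {x. u \<bullet> x \<ge> c}" "\<Gamma> \<subseteq> {x. u \<bullet> x \<ge> c'}"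
    using sL(2) sL'(2) by blast
  then show ?thesis
  proof cases
    case 1
    have "c' \<le> c" using 1 y' by auto
    then have lt: "c' < c" using cc by simp
    have sub: "\<Gamma> \<subseteq> {x. c' \<le> u \<bullet> x \<and> u \<bullet> x \<le> c}" using 1 by auto
    show ?thesis unfolding u(2,3) by (rule core[OF assms(1,2) u(1) lt sub nL nL'])
  next
    case 2
    have "c \<le> c'" using 2 y by auto
    then have lt: "c < c'" using cc by simp
    have sub: "\<Gamma> \<subseteq> {x. c \<le> u \<bullet> x \<and> u \<bullet> x \<le> c'}" using 2 by auto
    obtain a b a' b' where "{x. u \<bullet> x = c'} \<inter> \<Gamma> = closed_segment a b" "{x. u \<bullet> x = c} \<inter> \<Gamma> = closed_segment a' b'"
        "dist a b = dist a' b'"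
      using core[OF assms(1,2) u(1) lt sub nL' nL] by blast
    then show ?thesis unfolding u(2,3) by (intro exI[of _ a'] exI[of _ b'] exI[of _ a] exI[of _ b]) simp
  next
    case 3
    then have "c' \<le> c" "c \<le> c'" using y y' by auto
    then show ?thesis using cc by simp
  next
    case 4
    then have "c' \<ge> c" "c \<ge> c'" using y y' by auto
    then show ?thesis using cc by simp
  qed
qed

end
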